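(* Let $\ell, d, h \in \mathbb{N}$ and let $k$ be an odd positive integer, and set $R(d) = \lfloor k/2 \rfloor \cdot d$. Let $f: \mathbb{R}^{\ell} \to \mathbb{R}^{\ell}$ be a normalization-free one-dimensional convolutional neural network of depth $d$ with ReLU nonlinearity, i.e. $$\mathbf{z}^{(1)} = C_{in}(\mathbf{x}), \qquad \mathbf{z}^{(i)} = \sigma\big(C_i(\mathbf{z}^{(i-1)})\big) \ \ \forall i \in \{2,\dots,d\}, \qquad f(\mathbf{x}) = C_{out}\big(\mathbf{z}^{(d-1)}\big),$$ where $\sigma$ is the (elementwise) ReLU, and $C_{in}, C_i, C_{out}$ are arbitrary bias-enabled one-dimensional convolutional layers with kernel size $k$, zero-padding of width $\lfloor k/2 \rfloor$ on each side, unit stride and no dilation (so each maps length-$\ell$ sequences to length-$\ell$ sequences), with channel dimensions $1 \to h$ for $C_{in}$, $h \to h$ for each $C_i$, and $h \to 1$ for $C_{out}$. Assume $R(d) < \frac{\ell}{2} - 2$. Then $f$ does not localize any index $i^* \in \{R(d)+1, R(d)+2, \dots, \ell - R(d) - 1\}$, in the following sense: for every such $i^*$ there exists $j \in \{1,\dots,\ell\} \setminus \{i^*\}$ with $\mathbb{E}_{X \sim P_{f_{i^*}}}[X] = \mathbb{E}_{X \sim P_{f_j}}[X]$.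
   Context: For $f: \mathbb{R}^{\ell} \to \mathbb{R}^{\ell}$ and $i \in \{1,\dots,\ell\}$, $f_i: \mathbb{R}^{\ell} \to \mathbb{R}$ denotes the $i$-th output coordinate of $f$, and $P_{f_i}$ denotes the distribution of $f_i(\mathbf{x})$ when $\mathbf{x} \sim \mathcal{N}(\mathbf{0}_{\ell}, I_{\ell})$ (the pushforward of the standard Gaussian on $\mathbb{R}^{\ell}$ under $f_i$). The function $f$ is said to localize an index $i^* \in \{1,\dots,\ell\}$ if $\mathbb{E}_{X \sim P_{f_{i^*}}}[X] \neq \mathbb{E}_{X \sim P_{f_j}}[X]$ for all $j \in \{1,\dots,\ell\} \setminus \{i^*\}$. *)

theory Defs
  imports "HOL-Probability.Probability"
begin

text \<open>Sequences of length l with c channels are modelled as functions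
  z :: nat => nat => real, z ch p = value of channel ch (0-based) at position p
  (1-based, p in {1..l}). Inputs x :: nat => real are read at positions 1..l.\<close>

definition relu :: "real \<Rightarrow> real" where
  "relu t = max 0 t"

definition zpad :: "nat \<Rightarrow> (nat \<Rightarrow> nat \<Rightarrow> real) \<Rightarrow> nat \<Rightarrow> int \<Rightarrow> real" where
  "zpad l z c q = (if 1 \<le> q \<and> q \<le> int l then z c (nat q) else 0)"

definition conv1d :: "nat \<Rightarrow> nat \<Rightarrow> nat \<Rightarrow> (nat \<Rightarrow> nat \<Rightarrow> nat \<Rightarrow> real) \<Rightarrow> (nat \<Rightarrow> real)
    \<Rightarrow> (nat \<Rightarrow> nat \<Rightarrow> real) \<Rightarrow> (nat \<Rightarrow> nat \<Rightarrow> real)" where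
  "conv1d l k cin W b z = (\<lambda>co p. b co +
      (\<Sum>ci<cin. \<Sum>t<k. W co ci t * zpad l z ci (int p + int t - int (k div 2))))"

text \<open>Hidden representations: z 1 = C_in(x), z i = relu(C_i(z (i-1))) for i \<ge> 2.
  C_in has 1 input channel (channel 0 carries x), C_i have h input channels.
  z 0 is never used.\<close>
fun cnn_z :: "nat \<Rightarrow> nat \<Rightarrow> nat \<Rightarrow> (nat \<Rightarrow> nat \<Rightarrow> nat \<Rightarrow> real) \<Rightarrow> (nat \<Rightarrow> real)
    \<Rightarrow> (nat \<Rightarrow> nat \<Rightarrow> nat \<Rightarrow> nat \<Rightarrow> real) \<Rightarrow> (nat \<Rightarrow> nat \<Rightarrow> real)
    \<Rightarrow> (nat \<Rightarrow> real) \<Rightarrow> nat \<Rightarrow> (nat \<Rightarrow> nat \<Rightarrow> real)" where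
  "cnn_z l k h Win bin Ws bs x 0 = (\<lambda>_ _. 0)"
| "cnn_z l k h Win bin Ws bs x (Suc 0) = conv1d l k 1 Win bin (\<lambda>_ p. x p)"
| "cnn_z l k h Win bin Ws bs x (Suc (Suc i)) =
     (\<lambda>c p. relu (conv1d l k h (Ws (Suc (Suc i))) (bs (Suc (Suc i)))
                      (cnn_z l k h Win bin Ws bs x (Suc i)) c p))"

definition cnn :: "nat \<Rightarrow> nat \<Rightarrow> nat \<Rightarrow> nat \<Rightarrow> (nat \<Rightarrow> nat \<Rightarrow> nat \<Rightarrow> real) \<Rightarrow> (nat \<Rightarrow> real)
    \<Rightarrow> (nat \<Rightarrow> nat \<Rightarrow> nat \<Rightarrow> nat \<Rightarrow> real) \<Rightarrow> (nat \<Rightarrow> nat \<Rightarrow> real)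
    \<Rightarrow> (nat \<Rightarrow> nat \<Rightarrow> nat \<Rightarrow> real) \<Rightarrow> (nat \<Rightarrow> real)
    \<Rightarrow> (nat \<Rightarrow> real) \<Rightarrow> nat \<Rightarrow> real" where
  "cnn l k h d Win bin Ws bs Wout bout x p =
     conv1d l k h Wout bout (cnn_z l k h Win bin Ws bs x (d - 1)) 0 p"

definition std_gauss :: "nat \<Rightarrow> (nat \<Rightarrow> real) measure" where
  "std_gauss l = PiM {1..l} (\<lambda>_. density lborel std_normal_density)"

definition pushforward_mean :: "nat \<Rightarrow> ((nat \<Rightarrow> real) \<Rightarrow> nat \<Rightarrow> real) \<Rightarrow> nat \<Rightarrow> real" where
  "pushforward_mean l f i = (\<integral>X. X \<partial>(distr (std_gauss l) borel (\<lambda>x. f x i)))"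

definition localizes :: "nat \<Rightarrow> ((nat \<Rightarrow> real) \<Rightarrow> nat \<Rightarrow> real) \<Rightarrow> nat \<Rightarrow> bool" where
  "localizes l f istar \<longleftrightarrow>
     (\<forall>j \<in> {1..l} - {istar}. pushforward_mean l f istar \<noteq> pushforward_mean l f j)"

end

theory Submission imports Defs begin

lemma comp_meas:
  assumes "p \<in> {1..l}"
  shows "(\<lambda>x. x p) \<in> borel_measurable (std_gauss l)"
proof -
  have "(\<lambda>x. x p) \<in> measurable (std_gauss l) (density lborel std_normal_density)"
    unfolding std_gauss_def using assms by (rule measurable_component_singleton)
  moreover have "sets (density lborel std_normal_density) = sets (borel :: real measure)" by simp
  then have "measurable (std_gauss l) (density lborel std_normal_density) = borel_measurable (std_gauss l)"
    by (rule measurable_cong_sets[OF refl])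
  ultimately show ?thesis by simp
qed

lemma conv_meas:
  assumes "\<And>ci q. q \<in> {1..l} \<Longrightarrow> (\<lambda>x. Z x ci q) \<in> borel_measurable M"
  shows "(\<lambda>x. conv1d l k cin W b (Z x) c p) \<in> borel_measurable M"
proof -
  have z: "(\<lambda>x. zpad l (Z x) ci q) \<in> borel_measurable M" for ci q
  proof (cases "1 \<le> q \<and> q \<le> int l")
    case True
    then have "nat q \<in> {1..l}" by auto
    with True show ?thesis unfolding zpad_def using assms by simp
  next
    case False
    then have "(\<lambda>x. zpad l (Z x) ci q) = (\<lambda>x. 0)" by (auto simp: zpad_def)
    then show ?thesis by simp
  qed
  show ?thesis unfolding conv1d_def
    by (intro borel_measurable_add borel_measurable_sum borel_measurable_times z measurable_const) simp_all
qed

lemma z_meas: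
  "(\<lambda>x. cnn_z l k h Win bin Ws bs x i c p) \<in> borel_measurable (std_gauss l)"
proof (induction i arbitrary: c p rule: nat_less_induct)
  case (1 i)
  show ?case
  proof (cases i)
    case 0 then show ?thesis by simp
  next
    case (Suc m)
    show ?thesis
    proof (cases m)
      case 0
      then show ?thesis using Suc
        by (simp del: cnn_z.simps(3)) (rule conv_meas, rule comp_meas, simp)
    next
      case (Suc j)
      have "(\<lambda>x. conv1d l k h (Ws (Suc (Suc j))) (bs (Suc (Suc j)))
                      (cnn_z l k h Win bin Ws bs x (Suc j)) c p) \<in> borel_measurable (std_gauss l)"
        by (intro conv_meas) (use 1 \<open>i = Suc m\<close> Suc in auto)
      then have "(\<lambda>x. relu (conv1d l k h (Ws (Suc (Suc j))) (bs (Suc (Suc j)))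
                      (cnn_z l k h Win bin Ws bs x (Suc j)) c p)) \<in> borel_measurable (std_gauss l)"
        unfolding relu_def by measurable
      then show ?thesis using \<open>i = Suc m\<close> Suc by simp
    qed
  qed
qed

lemma zpad_in: "1 \<le> m \<Longrightarrow> m \<le> l \<Longrightarrow> zpad l z ci (int m) = z ci m"
  by (simp add: zpad_def)

lemma conv_shift:
  assumes k: "k = 2*r+1" and "r < p" "p + r < l"
    and zz: "\<forall>ci<cin. \<forall>q. p - r \<le> q \<and> q \<le> p + r \<longrightarrow> z ci q = z' ci (Suc q)"
  shows "conv1d l k cin W b z c p = conv1d l k cin W b z' c (Suc p)"
  unfolding conv1d_def
proof (intro arg_cong[where f="\<lambda>u. b c + u"] sum.cong refl arg_cong[where f="\<lambda>u. _ * u"])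
  fix ci t assume ci: "ci \<in> {..<cin}" and t: "t \<in> {..<k}"
  have kd: "k div 2 = r" using k by simp
  have q: "int p + int t - int r = int (p + t - r)" using assms t by auto
  have q2: "int (Suc p) + int t - int r = int (Suc (p + t - r))" using assms t by auto
  show "zpad l z ci (int p + int t - int (k div 2)) = zpad l z' ci (int (Suc p) + int t - int (k div 2))"
  proof -
    have r1: "1 \<le> p+t-r" "p+t-r \<le> l" "Suc(p+t-r) \<le> l" using assms(1-3) t by auto
    have c1: "ci < cin" using ci by simp
    have c2: "p - r \<le> p+t-r \<and> p+t-r \<le> p + r" using t k by auto
    have e: "z ci (p+t-r) = z' ci (Suc(p+t-r))" using zz c1 c2 by blast
    have L1: "int p + int t - int (k div 2) = int (p+t-r)" unfolding kd by (rule q)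
    have L2: "int (Suc p) + int t - int (k div 2) = int (Suc (p+t-r))" unfolding kd by (rule q2)
    have r4: "1 \<le> Suc(p+t-r)" by simp
    show ?thesis unfolding L1 L2 zpad_in[OF r1(1) r1(2)] zpad_in[OF r4 r1(3)] by (rule e)
  qed
qed


lemma z_shift:
  assumes k: "k = 2*r+1"
  shows "1 \<le> i \<Longrightarrow> r*i < p \<Longrightarrow> p + r*i < l \<Longrightarrow>
    (\<forall>q. p - r*i \<le> q \<and> q \<le> p + r*i \<longrightarrow> y q = x (Suc q)) \<Longrightarrow>
    cnn_z l k h Win bin Ws bs y i c p = cnn_z l k h Win bin Ws bs x i c (Suc p)"
proof (induction i arbitrary: c p)
  case 0 then show ?case by simp
next
  case (Suc m)
  note IH0 = Suc.IH and P = Suc.prems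
  show ?case
  proof (cases m)
    case 0
    have "conv1d l k 1 Win bin (\<lambda>_ p. y p) c p = conv1d l k 1 Win bin (\<lambda>_ p. x p) c (Suc p)"
      using P 0 by (intro conv_shift[OF k]) auto
    then show ?thesis using 0 by simp
  next
    case (Suc j)
    obtain a where a: "a = r * Suc j" by blast
    have ra: "r * Suc (Suc j) = a + r" using a by simp
    have P1: "a + r < p" "p + (a + r) < l"
      and P2: "\<forall>q. p - (a + r) \<le> q \<and> q \<le> p + (a + r) \<longrightarrow> y q = x (Suc q)"
      using P \<open>m = Suc j\<close> ra by auto
    have IH: "cnn_z l k h Win bin Ws bs y (Suc j) ci q = cnn_z l k h Win bin Ws bs x (Suc j) ci (Suc q)"
      if "p - r \<le> q" "q \<le> p + r" for ci q
    proof -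
      have w1: "a < q" "q + a < l" using that P1 by auto
      have w2: "\<forall>q'. q - a \<le> q' \<and> q' \<le> q + a \<longrightarrow> y q' = x (Suc q')"
      proof (intro allI impI)
        fix q' assume "q - a \<le> q' \<and> q' \<le> q + a"
        then have "p - (a + r) \<le> q' \<and> q' \<le> p + (a + r)" using that P1 by auto
        then show "y q' = x (Suc q')" using P2 by blast
      qed
      show ?thesis using IH0[of q ci] w1 w2 \<open>m = Suc j\<close> a by simp
    qed
    have "conv1d l k h (Ws (Suc (Suc j))) (bs (Suc (Suc j))) (cnn_z l k h Win bin Ws bs y (Suc j)) c p
        = conv1d l k h (Ws (Suc (Suc j))) (bs (Suc (Suc j))) (cnn_z l k h Win bin Ws bs x (Suc j)) c (Suc p)"
      using P1 IH by (intro conv_shift[OF k]) auto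
    then show ?thesis using \<open>m = Suc j\<close> by simp
  qed
qed


theorem propositionC1:
  fixes l d h k :: nat
    and Win Wout :: "nat \<Rightarrow> nat \<Rightarrow> nat \<Rightarrow> real" and bin bout :: "nat \<Rightarrow> real"
    and Ws :: "nat \<Rightarrow> nat \<Rightarrow> nat \<Rightarrow> nat \<Rightarrow> real" and bs :: "nat \<Rightarrow> nat \<Rightarrow> real"
    and istar :: nat
  assumes "odd k"
    and "d \<ge> 2"
    and "real ((k div 2) * d) < real l / 2 - 2"
    and "istar \<in> {(k div 2) * d + 1 .. l - (k div 2) * d - 1}"
  shows "\<not> localizes l (cnn l k h d Win bin Ws bs Wout bout) istar"
proof -
  define r where "r = k div 2"
  have k: "k = 2*r+1" using assms(1) unfolding r_def by presburger
  define f where "f = cnn l k h d Win bin Ws bs Wout bout"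
  define S where "S = std_gauss l"
  define N where "N = density lborel (std_normal_density :: real \<Rightarrow> real)"
  define pi :: "nat \<Rightarrow> nat" where "pi = (\<lambda>q. if q < l then Suc q else 1)"
  define T where "T = (\<lambda>x::nat\<Rightarrow>real. \<lambda>n\<in>{1..l}. x (pi n))"
  obtain b where b: "b = r * (d - 1)" by blast
  have rd: "r * d = b + r" using b assms(2) by (cases d) auto
  have lbig: "2 * (r*d) + 4 < l" using assms(3) unfolding r_def by linarith
  have is1: "b + r < istar" "istar + (b + r) < l" using assms(4) lbig rd unfolding r_def by auto
  have key: "f (T x) istar = f x (Suc istar)" for x
  proof -
    have zs: "cnn_z l k h Win bin Ws bs (T x) (d - 1) ci q = cnn_z l k h Win bin Ws bs x (d - 1) ci (Suc q)"
      if "istar - r \<le> q" "q \<le> istar + r" for ci q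
    proof (rule z_shift[OF k])
      show "1 \<le> d - 1" using assms(2) by simp
      show "r * (d - 1) < q" "q + r * (d - 1) < l" using that is1 b by auto
      show "\<forall>q'. q - r * (d - 1) \<le> q' \<and> q' \<le> q + r * (d - 1) \<longrightarrow> T x q' = x (Suc q')"
      proof (intro allI impI)
        fix q' assume "q - r * (d - 1) \<le> q' \<and> q' \<le> q + r * (d - 1)"
        then have "1 \<le> q'" "q' < l" using that is1 b by auto
        then show "T x q' = x (Suc q')" unfolding T_def pi_def by simp
      qed
    qed
    show ?thesis unfolding f_def cnn_def
      by (rule conv_shift[OF k]) (use is1 zs in auto)
  qed
  have Nprob: "prob_space N" unfolding N_def by (rule prob_space_normal_density) simp
  have SN: "S = PiM {1..l} (\<lambda>_. N)" unfolding S_def std_gauss_def N_def by simp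
  have dT: "distr S S T = S"
  proof -
    have "inj_on pi {1..l}" unfolding pi_def inj_on_def by auto
    moreover have "pi \<in> {1..l} \<rightarrow> {1..l}" unfolding pi_def using lbig by auto
    ultimately show ?thesis unfolding SN T_def
      using distr_PiM_reindex[of "{1..l}" "\<lambda>_. N" pi "{1..l}"] Nprob by simp
  qed
  have Tm: "T \<in> measurable S S"
    unfolding SN T_def
  proof (rule measurable_restrict)
    fix i assume "i \<in> {1..l}"
    then have "pi i \<in> {1..l}" unfolding pi_def using lbig by auto
    then show "(\<lambda>x. x (pi i)) \<in> measurable (PiM {1..l} (\<lambda>_. N)) N"
      by (rule measurable_component_singleton)
  qed
  have fm: "(\<lambda>x. f x p) \<in> borel_measurable S" for p
    unfolding f_def cnn_def S_def by (rule conv_meas, rule z_meas)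
  have "distr S borel (\<lambda>x. f x (Suc istar)) = distr S borel ((\<lambda>x. f x istar) \<circ> T)"
    using key by (simp add: comp_def)
  also have "\<dots> = distr (distr S S T) borel (\<lambda>x. f x istar)"
    using fm Tm by (simp add: distr_distr)
  also have "\<dots> = distr S borel (\<lambda>x. f x istar)" using dT by simp
  finally have "pushforward_mean l f (Suc istar) = pushforward_mean l f istar"
    unfolding pushforward_mean_def S_def by simp
  moreover have "Suc istar \<in> {1..l} - {istar}" using is1 by auto
  ultimately show ?thesis unfolding localizes_def f_def by metis
qed

end
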